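(* For every quantum score $S$ on $\mathcal X$ there exists a projective quantum score $S'$ with $S'(\rho';\rho)=S(\rho';\rho)$ for all $\rho,\rho'\in\mathrm{Dens}(\mathcal X)$.
   Context: Let $\mathcal X=\mathbb C^n$, $\mathrm{Herm}(\mathcal X)$ the Hermitian matrices with $\langle X,Y\rangle=\mathrm{Tr}(X^*Y)$, $\mathrm{Pos}(\mathcal X)$ the positive semidefinite ones, $\mathrm{Dens}(\mathcal X)$ the trace-one elements of $\mathrm{Pos}(\mathcal X)$. A measurement with finite outcome set $\mathcal Y\subseteq\mathbb N$ is $\mu=\{\mu_y\}_{y\in\mathcal Y}\subseteq\mathrm{Pos}(\mathcal X)$ with $\sum_y\mu_y=I$; it is projection-valued (a PVM) if the $\mu_y$ are mutually orthogonal orthogonal projections. A quantum score is $S=(s,\mu)$ with $s:\mathrm{Dens}(\mathcal X)\times\mathbb N\to\mathbb R\cup\{\pm\infty\}$, $\mu:\mathrm{Dens}(\mathcal X)\to\mathrm{Meas}(\mathcal X)$ (outcome set $\mathcal Y(\rho')$), expected score $S(\rho';\rho)=\sum_{y\in\mathcal Y(\rho')}\langle\mu(\rho')_y,\rho\rangle s(\rho',y)$, with conventions $0\cdot(\pm\infty)=0$ and $c\cdot(-\infty)=-\infty$ for $c>0$, and assumed well defined (no $\infty-\infty$). $S$ is projective if $\mu(\rho)$ is a PVM for every $\rho$. *)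

theory Defs
  imports "HOL-Analysis.Analysis" "HOL-Library.Extended_Real"
begin

text \<open>Matrices on X = C^n are represented as complex^'n::finite^'n for a finite index type 'n.\<close>

definition cadj :: "complex^'n::finite^'n \<Rightarrow> complex^'n::finite^'n" where
  "cadj A = (\<chi> i j. cnj (A $ j $ i))"

definition ctrace :: "complex^'n::finite^'n \<Rightarrow> complex" where
  "ctrace A = (\<Sum>i\<in>UNIV. A $ i $ i)"

text \<open>Hilbert-Schmidt inner product Tr(X^* Y).\<close>
definition hs_inner :: "complex^'n::finite^'n \<Rightarrow> complex^'n::finite^'n \<Rightarrow> complex" where
  "hs_inner X Y = ctrace (cadj X ** Y)"

definition herm :: "complex^'n::finite^'n \<Rightarrow> bool" where
  "herm A \<longleftrightarrow> cadj A = A"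

definition pos :: "complex^'n::finite^'n \<Rightarrow> bool" where
  "pos A \<longleftrightarrow> herm A \<and> (\<forall>v::complex^'n::finite. 0 \<le> Re (\<Sum>i\<in>UNIV. cnj (v $ i) * (A *v v) $ i))"

definition dens :: "complex^'n::finite^'n \<Rightarrow> bool" where
  "dens \<rho> \<longleftrightarrow> pos \<rho> \<and> ctrace \<rho> = 1"

text \<open>A measurement: finite outcome set Y of naturals and effects m y, y in Y.\<close>
definition is_measurement :: "nat set \<Rightarrow> (nat \<Rightarrow> complex^'n::finite^'n) \<Rightarrow> bool" where
  "is_measurement Y m \<longleftrightarrow> finite Y \<and> (\<forall>y\<in>Y. pos (m y)) \<and> (\<Sum>y\<in>Y. m y) = mat 1"

definition is_pvm :: "nat set \<Rightarrow> (nat \<Rightarrow> complex^'n::finite^'n) \<Rightarrow> bool" where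
  "is_pvm Y m \<longleftrightarrow> is_measurement Y m \<and>
     (\<forall>y\<in>Y. m y ** m y = m y \<and> cadj (m y) = m y) \<and>
     (\<forall>y\<in>Y. \<forall>z\<in>Y. y \<noteq> z \<longrightarrow> m y ** m z = 0)"

type_synonym ('n) qscore =
  "(complex^'n::finite^'n \<Rightarrow> nat \<Rightarrow> ereal) \<times> (complex^'n::finite^'n \<Rightarrow> nat set \<times> (nat \<Rightarrow> complex^'n::finite^'n))"

text \<open>Summand <mu(rho')_y, rho> s(rho', y); ereal multiplication already has 0*(+-inf)=0
  and c*(-inf) = -inf for c>0.\<close>
definition score_term :: "'n::finite qscore \<Rightarrow> complex^'n::finite^'n \<Rightarrow> complex^'n::finite^'n \<Rightarrow> nat \<Rightarrow> ereal" where
  "score_term S \<rho>' \<rho> y = ereal (Re (hs_inner (snd (snd S \<rho>') y) \<rho>)) * fst S \<rho>' y"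

definition expected_score :: "'n::finite qscore \<Rightarrow> complex^'n::finite^'n \<Rightarrow> complex^'n::finite^'n \<Rightarrow> ereal" where
  "expected_score S \<rho>' \<rho> = (\<Sum>y\<in>fst (snd S \<rho>'). score_term S \<rho>' \<rho> y)"

text \<open>Well-definedness: no sum of the form infinity minus infinity.\<close>
definition score_well_defined :: "'n::finite qscore \<Rightarrow> bool" where
  "score_well_defined S \<longleftrightarrow> (\<forall>\<rho>' \<rho>. dens \<rho>' \<longrightarrow> dens \<rho> \<longrightarrow>
     \<not> ((\<exists>y\<in>fst (snd S \<rho>'). score_term S \<rho>' \<rho> y = \<infinity>) \<and>
        (\<exists>y\<in>fst (snd S \<rho>'). score_term S \<rho>' \<rho> y = -\<infinity>)))"

definition quantum_score :: "'n::finite qscore \<Rightarrow> bool" where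
  "quantum_score S \<longleftrightarrow> (\<forall>\<rho>. dens \<rho> \<longrightarrow> is_measurement (fst (snd S \<rho>)) (snd (snd S \<rho>)))
     \<and> score_well_defined S"

definition projective :: "'n::finite qscore \<Rightarrow> bool" where
  "projective S \<longleftrightarrow> (\<forall>\<rho>. dens \<rho> \<longrightarrow> is_pvm (fst (snd S \<rho>)) (snd (snd S \<rho>)))"

end

theory Submission
  imports Defs
begin

definition cinner :: "complex^'n::finite \<Rightarrow> complex^'n \<Rightarrow> complex" where
  "cinner u v = (\<Sum>i\<in>UNIV. cnj (u$i) * v$i)"

lemma inner_cinner: "(u::complex^'n::finite) \<bullet> v = Re (cinner u v)"
  by (simp add: inner_vec_def cinner_def inner_complex_def Re_sum)

lemma cinner_self: "cinner u u = complex_of_real ((norm u)^2)"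
proof -
  have "cinner u u = (\<Sum>i\<in>UNIV. complex_of_real ((cmod (u$i))^2))"
    unfolding cinner_def by (intro sum.cong refl) (metis complex_norm_square mult.commute of_real_power)
  also have "\<dots> = complex_of_real (\<Sum>i\<in>UNIV. (cmod (u$i))^2)" by simp
  also have "(\<Sum>i\<in>UNIV. (cmod (u$i))^2) = (norm u)^2"
    by (simp add: norm_vec_def L2_set_def sum_nonneg)
  finally show ?thesis .
qed

lemma sR: "r *\<^sub>R (z::complex) = of_real r * z" by (simp add: scaleR_conv_of_real)

lemma cadj_nth[simp]: "cadj A $ i $ j = cnj (A $ j $ i)"
  by (simp add: cadj_def)

lemma cadj_cadj[simp]: "cadj (cadj A) = A"
  by (simp add: vec_eq_iff)

lemma cadj_mult: "cadj (A ** B) = cadj B ** cadj A"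
  by (simp add: vec_eq_iff matrix_matrix_mult_def mult.commute)

lemma cadj_add: "cadj (A + B) = cadj A + cadj B"
  by (simp add: vec_eq_iff)

lemma cadj_diff: "cadj (A - B) = cadj A - cadj B"
  by (simp add: vec_eq_iff)

lemma cadj_zero[simp]: "cadj 0 = 0"
  by (simp add: vec_eq_iff)

lemma cadj_mat1[simp]: "cadj (mat 1) = mat 1"
  by (simp add: vec_eq_iff mat_def)

lemma cadj_scaleR: "cadj (r *\<^sub>R A) = r *\<^sub>R cadj A"
  by (simp add: vec_eq_iff sR)

lemma cadj_sum: "cadj (sum f K) = (\<Sum>k\<in>K. cadj (f k))"
  by (induction K rule: infinite_finite_induct) (auto simp: cadj_add)

lemma cinner_adj: "cinner (A *v u) v = cinner u (cadj A *v v)"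
  unfolding cinner_def matrix_vector_mult_def
  by (simp add: sum_distrib_left sum_distrib_right mult_ac)
     (rule sum.swap)

lemma ctrace_add: "ctrace (A + B) = ctrace A + ctrace B"
  by (simp add: ctrace_def sum.distrib)

lemma ctrace_diff: "ctrace (A - B) = ctrace A - ctrace B"
  by (simp add: ctrace_def sum_subtractf)

lemma ctrace_scaleR: "ctrace (r *\<^sub>R A) = complex_of_real r * ctrace A"
  by (simp add: ctrace_def sR sum_distrib_left)

lemma ctrace_zero[simp]: "ctrace 0 = 0"
  by (simp add: ctrace_def)

lemma ctrace_sum: "ctrace (sum f K) = (\<Sum>k\<in>K. ctrace (f k))"
  by (induction K rule: infinite_finite_induct) (auto simp: ctrace_add)

lemma ctrace_comm: "ctrace (A ** B) = ctrace (B ** A)"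
  unfolding ctrace_def matrix_matrix_mult_def
  by (simp add: mult.commute) (rule sum.swap)

lemma matrix_scaleR_left: "(r *\<^sub>R A) ** B = r *\<^sub>R (A ** (B::complex^'n::finite^'n))"
  by (simp add: vec_eq_iff matrix_matrix_mult_def sR sum_distrib_left mult_ac)

lemma matrix_scaleR_right: "A ** (r *\<^sub>R B) = r *\<^sub>R (A ** (B::complex^'n::finite^'n))"
  by (simp add: vec_eq_iff matrix_matrix_mult_def sR sum_distrib_left mult_ac)

lemma matrix_add_rdist: "(A + B) ** (C::complex^'n::finite^'n) = A ** C + B ** C"
  by (simp add: vec_eq_iff matrix_matrix_mult_def algebra_simps sum.distrib)

lemma matrix_sum_left: "(sum f K) ** (B::complex^'n::finite^'n) = (\<Sum>k\<in>K. f k ** B)"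
  by (induction K rule: infinite_finite_induct) (auto simp: matrix_add_rdist)

lemma matrix_sum_right: "(B::complex^'n::finite^'n) ** (sum f K) = (\<Sum>k\<in>K. B ** f k)"
  by (induction K rule: infinite_finite_induct) (auto simp: matrix_add_ldistrib)

lemma matrix_diff_left: "(A - B) ** (C::complex^'n::finite^'n) = A ** C - B ** C"
  by (simp add: vec_eq_iff matrix_matrix_mult_def algebra_simps sum_subtractf)

lemma matrix_diff_right: "C ** (A - B) = C ** A - C ** (B::complex^'n::finite^'n)"
  by (simp add: vec_eq_iff matrix_matrix_mult_def algebra_simps sum_subtractf)


lemma cinner_cnj: "cinner u v = cnj (cinner v u)"
  by (simp add: cinner_def mult.commute)

lemma herm_sym:
  assumes "herm B"
  shows "y \<bullet> (B *v x) = x \<bullet> (B *v y)"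
proof -
  have "cinner y (B *v x) = cinner (B *v y) x"
    using cinner_adj[of B y x] assms by (simp add: herm_def)
  also have "\<dots> = cnj (cinner x (B *v y))" by (rule cinner_cnj)
  finally show ?thesis by (simp add: inner_cinner)
qed

lemma mat_vec_scaleR: "A *v (r *\<^sub>R v) = r *\<^sub>R (A *v (v::complex^'n::finite))"
  by (simp add: vec_eq_iff matrix_vector_mult_def sR sum_distrib_left mult_ac)

lemma psd_zero:
  fixes B :: "complex^'n::finite^'n"
  assumes hB: "herm B" and V: "subspace V" and pos: "\<forall>v\<in>V. 0 \<le> v \<bullet> (B *v v)"
    and x: "x \<in> V" and x0: "x \<bullet> (B *v x) = 0" and Bx: "B *v x \<in> V"
  shows "B *v x = 0"
proof -
  define y where "y = B *v x"
  define a where "a = y \<bullet> y"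
  define b where "b = y \<bullet> (B *v y)"
  have b0: "0 \<le> b" using pos Bx by (simp add: b_def y_def)
  have key: "0 \<le> 2 * t * a + t^2 * b" for t :: real
  proof -
    have "x + t *\<^sub>R y \<in> V" using V x Bx by (simp add: y_def subspace_add subspace_scale)
    hence "0 \<le> (x + t *\<^sub>R y) \<bullet> (B *v (x + t *\<^sub>R y))" using pos by blast
    also have "\<dots> = x \<bullet> (B *v x) + t * (x \<bullet> (B *v y)) + t * (y \<bullet> (B *v x)) + t^2 * b"
      by (simp add: matrix_vector_right_distrib mat_vec_scaleR inner_add_left
            inner_add_right b_def power2_eq_square algebra_simps)
    also have "x \<bullet> (B *v y) = y \<bullet> (B *v x)" using herm_sym[OF hB] by simp
    finally show ?thesis using x0 by (simp add: a_def y_def algebra_simps)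
  qed
  have "a = 0"
  proof (rule ccontr)
    assume "a \<noteq> 0"
    hence ap: "a > 0" by (simp add: a_def)
    define t where "t = - a / (b + 1)"
    have "0 \<le> 2 * t * a + t^2 * b" by (rule key)
    also have "2 * t * a + t^2 * b = a^2 * (- b - 2) / (b+1)^2"
    proof -
      have "b + 1 \<noteq> 0" using b0 by simp
      thus ?thesis by (simp add: t_def power2_eq_square divide_simps) (simp add: algebra_simps)
    qed
    also have "\<dots> < 0" using ap b0 by (intro divide_neg_pos mult_pos_neg) auto
    finally show False by simp
  qed
  thus ?thesis by (simp add: a_def y_def)
qed

definition proj :: "complex^'n::finite^'n \<Rightarrow> bool" where
  "proj P \<longleftrightarrow> cadj P = P \<and> P ** P = P"

lemma scaleR_mat_vec: "(r *\<^sub>R X) *v (v::complex^'n::finite) = r *\<^sub>R (X *v v)"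
  by (simp add: vec_eq_iff matrix_vector_mult_def sR sum_distrib_left mult_ac)

lemma eigen_exists:
  fixes A Q :: "complex^'n::finite^'n"
  assumes hA: "herm A" and Q: "proj Q" and Q0: "Q \<noteq> 0" and com: "A ** Q = Q ** A"
  shows "\<exists>u M. Q *v u = u \<and> norm u = 1 \<and> A *v u = M *\<^sub>R u"
proof -
  define V where "V = range ((*v) Q)"
  have V: "subspace V" unfolding V_def
    by (rule linear_subspace_image) auto
  have cV: "closed V" using V by (rule closed_subspace)
  define K where "K = sphere 0 1 \<inter> V"
  have cK: "compact K" unfolding K_def using cV by (intro compact_Int_closed) auto
  obtain v where v: "Q *v v \<noteq> 0" using Q0 matrix_eq[of Q 0] by auto
  define w where "w = (1 / norm (Q *v v)) *\<^sub>R (Q *v v)"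
  have "w \<in> K" unfolding K_def w_def V_def using v
    by (auto intro!: subspace_scale[OF V[unfolded V_def]])
  hence Kne: "K \<noteq> {}" by auto
  have contA: "continuous_on UNIV ((*v) A)"
    by (intro linear_continuous_on linear_conv_bounded_linear[THEN iffD1]) auto
  have cont: "continuous_on K (\<lambda>x. x \<bullet> (A *v x))"
    by (intro continuous_intros continuous_on_subset[OF contA]) auto
  obtain u where uK: "u \<in> K" and umax: "\<forall>y\<in>K. y \<bullet> (A *v y) \<le> u \<bullet> (A *v u)"
    using continuous_attains_sup[OF cK Kne cont] by blast
  define M where "M = u \<bullet> (A *v u)"
  define B where "B = M *\<^sub>R mat 1 - A"
  have Bv: "B *v x = M *\<^sub>R x - A *v x" for x
    by (simp add: B_def matrix_vector_mult_diff_rdistrib scaleR_mat_vec)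
  have hB: "herm B" using hA by (simp add: herm_def B_def cadj_diff cadj_scaleR)
  have nu: "norm u = 1" and uV: "u \<in> V" using uK by (auto simp: K_def)
  have Qu: "Q *v u = u" using uV Q unfolding V_def proj_def
    by (auto simp: matrix_vector_mul_assoc)
  have posB: "\<forall>x\<in>V. 0 \<le> x \<bullet> (B *v x)"
  proof
    fix x assume xV: "x \<in> V"
    show "0 \<le> x \<bullet> (B *v x)"
    proof (cases "x = 0")
      case True thus ?thesis by simp
    next
      case False
      define z where "z = (1 / norm x) *\<^sub>R x"
      have "z \<in> K" unfolding K_def z_def using False xV V by (auto intro: subspace_scale)
      hence "z \<bullet> (A *v z) \<le> M" using umax M_def by auto
      hence "(1/norm x)^2 * (x \<bullet> (A *v x)) \<le> M"
        by (simp add: z_def mat_vec_scaleR power2_eq_square)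
      hence "x \<bullet> (A *v x) \<le> M * (norm x)^2" using False
        by (simp add: field_simps)
      thus ?thesis by (simp add: Bv inner_diff_right power2_norm_eq_inner)
    qed
  qed
  have u0: "u \<bullet> (B *v u) = 0"
    using nu by (simp add: Bv inner_diff_right M_def power2_norm_eq_inner[symmetric])
  have "A *v u = Q *v (A *v u)"
    by (metis Qu com matrix_vector_mul_assoc)
  hence AuV: "A *v u \<in> V" unfolding V_def by (metis rangeI)
  have BuV: "B *v u \<in> V" unfolding Bv using V uV AuV by (intro subspace_diff subspace_scale) auto
  have "B *v u = 0" by (rule psd_zero[OF hB V posB uV u0 BuV])
  hence "A *v u = M *\<^sub>R u" by (simp add: Bv)
  thus ?thesis using Qu nu by blast
qed


definition rk1 :: "complex^'n::finite \<Rightarrow> complex^'n^'n" where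
  "rk1 u = (\<chi> i j. u$i * cnj (u$j))"

lemma rk1_adj: "cadj (rk1 u) = rk1 u"
  by (simp add: vec_eq_iff rk1_def mult.commute)

lemma mult_rk1: "X ** rk1 u = (\<chi> i j. (X *v u)$i * cnj (u$j))"
  by (simp add: vec_eq_iff rk1_def matrix_matrix_mult_def matrix_vector_mult_def sum_distrib_right sum_distrib_left mult_ac)

lemma rk1_vec: "rk1 u *v v = cinner u v *s u"
  by (simp add: vec_eq_iff rk1_def cinner_def matrix_vector_mult_def sum_distrib_left mult_ac)

lemma norm1_cinner: "norm u = 1 \<Longrightarrow> cinner u u = 1"
  by (simp add: cinner_self)

lemma rk1_idem: "norm u = 1 \<Longrightarrow> rk1 u ** rk1 u = rk1 u"
  by (simp add: mult_rk1 rk1_vec norm1_cinner) (simp add: rk1_def)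

lemma proj_rk1: "norm u = 1 \<Longrightarrow> proj (rk1 u)"
  by (simp add: proj_def rk1_adj rk1_idem)

lemma rk1_left: "X *v u = u \<Longrightarrow> X ** rk1 u = rk1 u"
  unfolding mult_rk1 by (simp add: rk1_def)

lemma rk1_left_scale: "X *v u = M *\<^sub>R u \<Longrightarrow> X ** rk1 u = M *\<^sub>R rk1 u"
  unfolding mult_rk1 by (simp add: rk1_def vec_eq_iff sR)

lemma adj_flip: "cadj X = X \<Longrightarrow> cadj Y = Y \<Longrightarrow> X ** Y = Z \<Longrightarrow> Y ** X = cadj Z"
  by (metis cadj_mult)

lemma proj_sum_mult:
  assumes "finite K" "\<forall>k\<in>K. proj (P k)" "\<forall>k\<in>K. \<forall>l\<in>K. k \<noteq> l \<longrightarrow> P k ** P l = 0" "k \<in> K"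
  shows "P k ** sum P K = P k"
proof -
  have "P k ** sum P K = (\<Sum>l\<in>K. P k ** P l)" by (rule matrix_sum_right)
  also have "\<dots> = P k ** P k + (\<Sum>l\<in>K-{k}. P k ** P l)"
    using assms by (simp add: sum.remove)
  also have "(\<Sum>l\<in>K-{k}. P k ** P l) = 0" using assms by (intro sum.neutral) auto
  finally show ?thesis using assms by (simp add: proj_def)
qed

lemma spectral_gen:
  fixes A Q :: "complex^'n::finite^'n"
  assumes hA: "herm A" and Q: "proj Q" and com: "A ** Q = Q ** A"
  shows "\<exists>K P s. finite (K::nat set) \<and> (\<forall>k\<in>K. proj (P k)) \<and>
     (\<forall>k\<in>K. \<forall>l\<in>K. k \<noteq> l \<longrightarrow> P k ** P l = 0) \<and> sum P K = Q \<and>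
     (\<Sum>k\<in>K. s k *\<^sub>R P k) = A ** Q"
  using Q com
proof (induction "dim (range ((*v) Q))" arbitrary: Q rule: less_induct)
  case less
  show ?case
  proof (cases "Q = 0")
    case True
    show ?thesis by (rule exI[of _ "{}"]) (simp add: True)
  next
    case False
    obtain u M where Qu: "Q *v u = u" and nu: "norm u = 1" and Au: "A *v u = M *\<^sub>R u"
      using eigen_exists[OF hA less.prems(1) False less.prems(2)] by blast
    define R where "R = rk1 u"
    define Q' where "Q' = Q - R"
    have hQ: "cadj Q = Q" "Q ** Q = Q" using less.prems(1) by (auto simp: proj_def)
    have hR: "cadj R = R" "R ** R = R" using nu by (auto simp: R_def rk1_adj rk1_idem)
    have QR: "Q ** R = R" by (simp add: R_def rk1_left Qu)
    have RQ: "R ** Q = R" using adj_flip[OF hQ(1) hR(1) QR] hR by simp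
    have AR: "A ** R = M *\<^sub>R R" by (simp add: R_def rk1_left_scale Au)
    have RA: "R ** A = M *\<^sub>R R" using adj_flip[OF _ hR(1) AR] hA
      by (simp add: herm_def cadj_scaleR hR)
    have Q'proj: "proj Q'"
      by (simp add: proj_def Q'_def cadj_diff hQ hR matrix_diff_left matrix_diff_right QR RQ)
    have Q'com: "A ** Q' = Q' ** A"
      by (simp add: Q'_def matrix_diff_left matrix_diff_right less.prems(2) AR RA)
    have QQ': "Q ** Q' = Q'" by (simp add: Q'_def matrix_diff_right hQ QR)
    have Q'R: "Q' ** R = 0" by (simp add: Q'_def matrix_diff_left hR QR)
    have Ru: "R *v u = u" by (simp add: R_def rk1_vec norm1_cinner nu)
    have sub: "range ((*v) Q') \<subseteq> range ((*v) Q)"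
    proof
      fix x assume "x \<in> range ((*v) Q')"
      then obtain w where "x = Q' *v w" by auto
      hence "x = Q *v (Q' *v w)" by (simp add: matrix_vector_mul_assoc QQ')
      thus "x \<in> range ((*v) Q)" by auto
    qed
    have notin: "u \<notin> range ((*v) Q')"
    proof
      assume "u \<in> range ((*v) Q')"
      then obtain w where w: "u = Q' *v w" by auto
      have "Q' *v u = u" using w Q'proj by (simp add: proj_def matrix_vector_mul_assoc)
      moreover have "Q' *v u = 0" by (simp add: Q'_def matrix_vector_mult_diff_rdistrib Qu Ru)
      ultimately have "u = 0" by simp
      thus False using nu by simp
    qed
    have lin: "\<And>X::complex^'n^'n. subspace (range ((*v) X))"
      by (rule linear_subspace_image) auto
    have "range ((*v) Q') \<subset> range ((*v) Q)" using sub notin Qu by (metis psubsetI rangeI)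
    hence "dim (range ((*v) Q')) < dim (range ((*v) Q))"
    proof -
      have "span (range ((*v) Q')) = range ((*v) Q')" "span (range ((*v) Q)) = range ((*v) Q)"
        by (simp_all add: lin)
      thus ?thesis using \<open>range ((*v) Q') \<subset> range ((*v) Q)\<close> by (metis eucl.dim_psubset)
    qed
    from less.hyps[OF this Q'proj Q'com]
    obtain K P s where K: "finite (K::nat set)" and Pp: "\<forall>k\<in>K. proj (P k)"
      and Po: "\<forall>k\<in>K. \<forall>l\<in>K. k \<noteq> l \<longrightarrow> P k ** P l = 0" and PS: "sum P K = Q'"
      and sS: "(\<Sum>k\<in>K. s k *\<^sub>R P k) = A ** Q'" by blast
    obtain k0 where k0: "k0 \<notin> K" using K ex_new_if_finite infinite_UNIV_nat by blast
    define P' where "P' = P(k0 := R)"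
    define s' where "s' = s(k0 := M)"
    have PR: "P k ** R = 0" if "k \<in> K" for k
    proof -
      have "P k ** R = (P k ** sum P K) ** R" using proj_sum_mult[OF K Pp Po that] by simp
      also have "\<dots> = 0" by (simp add: PS matrix_mul_assoc[symmetric] Q'R)
      finally show ?thesis .
    qed
    have RP: "R ** P k = 0" if "k \<in> K" for k
      using adj_flip[OF _ hR(1) PR[OF that]] Pp that by (simp add: proj_def)
    have s1: "sum P' (insert k0 K) = R + Q'"
      using K k0 by (simp add: P'_def PS[symmetric] sum.insert) (intro sum.cong, auto)
    have s2: "(\<Sum>k\<in>insert k0 K. s' k *\<^sub>R P' k) = M *\<^sub>R R + A ** Q'"
      using K k0 by (simp add: P'_def s'_def sS[symmetric]) (intro sum.cong, auto)
    show ?thesis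
    proof (intro exI conjI)
      show "finite (insert k0 K)" using K by simp
      show "\<forall>k\<in>insert k0 K. proj (P' k)" using Pp k0 nu
        by (auto simp: P'_def R_def proj_rk1)
      show "\<forall>k\<in>insert k0 K. \<forall>l\<in>insert k0 K. k \<noteq> l \<longrightarrow> P' k ** P' l = 0"
        using Po PR RP k0 by (auto simp: P'_def)
      show "sum P' (insert k0 K) = Q" using s1 by (simp add: Q'_def)
      show "(\<Sum>k\<in>insert k0 K. s' k *\<^sub>R P' k) = A ** Q" using s2
        by (simp add: Q'_def matrix_diff_right AR)
    qed
  qed
qed


lemma pos_herm: "pos X \<Longrightarrow> herm X" by (simp add: pos_def)

lemma hs_herm: "herm X \<Longrightarrow> hs_inner X \<rho> = ctrace (X ** \<rho>)"
  by (simp add: hs_inner_def herm_def)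

lemma hs_sum: "hs_inner (sum f K) \<rho> = (\<Sum>k\<in>K. hs_inner (f k) \<rho>)"
  by (simp add: hs_inner_def cadj_sum matrix_sum_left ctrace_sum)

lemma hs_scaleR: "hs_inner (r *\<^sub>R X) \<rho> = of_real r * hs_inner X \<rho>"
  by (simp only: hs_inner_def cadj_scaleR matrix_scaleR_left ctrace_scaleR)

lemma pos_qf: "pos X \<longleftrightarrow> herm X \<and> (\<forall>v. 0 \<le> v \<bullet> (X *v v))"
  by (simp add: pos_def inner_cinner cinner_def)

lemma proj_herm: "proj P \<Longrightarrow> herm P" by (simp add: proj_def herm_def)

lemma proj_pos: "proj P \<Longrightarrow> pos P"
proof -
  assume P: "proj P"
  have "v \<bullet> (P *v v) = (P *v v) \<bullet> (P *v v)" for v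
  proof -
    have "v \<bullet> (P *v v) = v \<bullet> (P *v (P *v v))" using P
      by (simp add: proj_def matrix_vector_mul_assoc)
    also have "\<dots> = (P *v v) \<bullet> (P *v v)" by (rule herm_sym[OF proj_herm[OF P]])
    finally show ?thesis .
  qed
  thus ?thesis using P by (simp add: pos_qf proj_herm)
qed

definition col :: "complex^'n::finite^'n \<Rightarrow> 'n \<Rightarrow> complex^'n" where
  "col P i = (\<chi> j. P$j$i)"

lemma mult_col: "(X ** P) $ j $ i = (X *v col P i) $ j"
  by (simp add: col_def matrix_matrix_mult_def matrix_vector_mult_def)

lemma trace_col:
  assumes P: "proj P"
  shows "ctrace (X ** P) = (\<Sum>i\<in>UNIV. cinner (col P i) (X *v col P i))"
proof -
  have c: "cnj (P$j$i) = P$i$j" for i j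
    using P unfolding proj_def by (metis cadj_nth)
  have "ctrace (X ** P) = ctrace ((X ** P) ** P)"
    using P by (simp add: proj_def matrix_mul_assoc[symmetric])
  also have "\<dots> = ctrace (P ** (X ** P))" by (rule ctrace_comm)
  also have "\<dots> = (\<Sum>i\<in>UNIV. cinner (col P i) (X *v col P i))"
    by (simp add: ctrace_def matrix_matrix_mult_def cinner_def matrix_vector_mult_def col_def c)
  finally show ?thesis .
qed

lemma trace_proj_nonneg:
  assumes X: "pos X" and P: "proj P"
  shows "0 \<le> Re (ctrace (X ** P))" and "Re (ctrace (X ** P)) = 0 \<Longrightarrow> X ** P = 0"
proof -
  have eq: "Re (ctrace (X ** P)) = (\<Sum>i\<in>UNIV. col P i \<bullet> (X *v col P i))"
    by (simp add: trace_col[OF P] Re_sum inner_cinner)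
  have nn: "\<forall>i\<in>UNIV. 0 \<le> col P i \<bullet> (X *v col P i)" using X by (simp add: pos_qf)
  show "0 \<le> Re (ctrace (X ** P))" unfolding eq using nn by (simp add: sum_nonneg)
  assume "Re (ctrace (X ** P)) = 0"
  hence z: "\<forall>i\<in>UNIV. col P i \<bullet> (X *v col P i) = 0"
    unfolding eq using nn sum_nonneg_eq_0_iff[of UNIV "\<lambda>i. col P i \<bullet> (X *v col P i)"] by simp
  have "X *v col P i = 0" for i
    by (rule psd_zero[OF pos_herm[OF X] subspace_UNIV]) (use X z in \<open>auto simp: pos_qf\<close>)
  thus "X ** P = 0" by (simp add: vec_eq_iff mult_col)
qed

lemma proj_sum:
  assumes "finite K" "\<forall>k\<in>K. proj (P k)" "\<forall>k\<in>K. \<forall>l\<in>K. k \<noteq> l \<longrightarrow> P k ** P l = 0"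
  shows "proj (sum P K)"
proof -
  have "sum P K ** sum P K = (\<Sum>k\<in>K. P k ** sum P K)" by (rule matrix_sum_left)
  also have "\<dots> = sum P K" using proj_sum_mult[OF assms] by simp
  finally show ?thesis using assms(2) by (simp add: proj_def cadj_sum)
qed

lemma wsum_mult:
  assumes "finite K" "\<forall>k\<in>K. proj (P k)" "\<forall>k\<in>K. \<forall>l\<in>K. k \<noteq> l \<longrightarrow> P k ** P l = 0" "k \<in> K"
  shows "(\<Sum>l\<in>K. f l *\<^sub>R P l) ** P k = f k *\<^sub>R P k"
proof -
  have "(\<Sum>l\<in>K. f l *\<^sub>R P l) ** P k = (\<Sum>l\<in>K. f l *\<^sub>R (P l ** P k))"
    by (simp add: matrix_sum_left matrix_scaleR_left)
  also have "\<dots> = f k *\<^sub>R (P k ** P k) + (\<Sum>l\<in>K-{k}. f l *\<^sub>R (P l ** P k))"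
    using assms by (simp add: sum.remove)
  also have "(\<Sum>l\<in>K-{k}. f l *\<^sub>R (P l ** P k)) = 0" using assms by (intro sum.neutral) auto
  finally show ?thesis using assms by (simp add: proj_def)
qed

lemma proj_one: "proj (mat 1 :: complex^'n::finite^'n)"
  by (simp add: proj_def)

lemma pos_spectral:
  fixes X :: "complex^'n::finite^'n"
  assumes X: "pos X"
  shows "\<exists>K P b. finite (K::nat set) \<and> (\<forall>k\<in>K. proj (P k)) \<and>
     (\<forall>k\<in>K. \<forall>l\<in>K. k \<noteq> l \<longrightarrow> P k ** P l = 0) \<and> sum P K = mat 1 \<and>
     (\<Sum>k\<in>K. b k *\<^sub>R P k) = X \<and> (\<forall>k\<in>K. P k \<noteq> 0 \<longrightarrow> 0 \<le> b k)"
proof -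
  have com: "X ** mat 1 = mat 1 ** X" by simp
  obtain K P b where K: "finite (K::nat set)" and Pp: "\<forall>k\<in>K. proj (P k)"
    and Po: "\<forall>k\<in>K. \<forall>l\<in>K. k \<noteq> l \<longrightarrow> P k ** P l = 0" and PS: "sum P K = mat 1"
    and bS: "(\<Sum>k\<in>K. b k *\<^sub>R P k) = X"
    using spectral_gen[OF pos_herm[OF X] proj_one com] unfolding matrix_mul_rid
      by (elim exE conjE)
  have bnn: "0 \<le> b k" if k: "k \<in> K" and nz: "P k \<noteq> 0" for k
  proof -
    obtain v where v: "P k *v v \<noteq> 0" using nz matrix_eq[of "P k" 0] by auto
    define w where "w = P k *v v"
    have XP: "X ** P k = b k *\<^sub>R P k" using wsum_mult[OF K Pp Po k, of b] bS by simp
    have "X *v w = b k *\<^sub>R w"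
      by (simp add: w_def matrix_vector_mul_assoc XP scaleR_mat_vec)
    hence "w \<bullet> (X *v w) = b k * (w \<bullet> w)" by simp
    moreover have "0 \<le> w \<bullet> (X *v w)" using X by (simp add: pos_qf)
    moreover have "0 < w \<bullet> w" using v by (simp add: w_def)
    ultimately show ?thesis by (simp add: zero_le_mult_iff)
  qed
  have bS': "(\<Sum>k\<in>K. b k *\<^sub>R P k) = X" using bS by simp
  have bnn': "\<forall>k\<in>K. P k \<noteq> 0 \<longrightarrow> 0 \<le> b k" using bnn by blast
  show ?thesis using K Pp Po PS bS' bnn'
    by (intro exI[of _ K] exI[of _ P] exI[of _ b] conjI) assumption+
qed

lemma pos_trace_nonneg:
  assumes X: "pos X" and R: "pos \<rho>"
  shows "0 \<le> Re (ctrace (X ** \<rho>))"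
proof -
  obtain K P b where K: "finite (K::nat set)" and Pp: "\<forall>k\<in>K. proj (P k)"
    and bS: "(\<Sum>k\<in>K. b k *\<^sub>R P k) = \<rho>" and bnn: "\<forall>k\<in>K. P k \<noteq> 0 \<longrightarrow> 0 \<le> b k"
    using pos_spectral[OF R] by (elim exE conjE)
  have "Re (ctrace (X ** \<rho>)) = (\<Sum>k\<in>K. b k * Re (ctrace (X ** P k)))"
    by (simp add: bS[symmetric] matrix_sum_right matrix_scaleR_right ctrace_sum ctrace_scaleR Re_sum)
  also have "0 \<le> \<dots>"
  proof (intro sum_nonneg)
    fix k assume k: "k \<in> K"
    show "0 \<le> b k * Re (ctrace (X ** P k))"
    proof (cases "P k = 0")
      case True thus ?thesis by simp
    next
      case False thus ?thesis using bnn k trace_proj_nonneg(1)[OF X] Pp by simp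
    qed
  qed
  finally show ?thesis .
qed

lemma pos_add: "pos X \<Longrightarrow> pos Y \<Longrightarrow> pos (X + Y)"
  by (simp add: pos_qf herm_def cadj_add matrix_vector_mult_add_rdistrib inner_add_right add_nonneg_nonneg)

lemma pos_zero: "pos (0::complex^'n::finite^'n)"
  by (simp add: pos_qf herm_def)

lemma pos_sum: "(\<forall>k\<in>K. pos (f k)) \<Longrightarrow> pos (sum f K)"
  by (induction K rule: infinite_finite_induct) (auto simp: pos_zero pos_add)

lemma ctrace_mat1: "ctrace (mat 1 :: complex^'n::finite^'n) = of_nat CARD('n)"
  by (simp add: ctrace_def mat_def)

lemma pos_trace_pos: "pos X \<Longrightarrow> X \<noteq> 0 \<Longrightarrow> 0 < Re (ctrace X)"
  using trace_proj_nonneg[OF _ proj_one, of X] by force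

lemma dens_mixed: "dens ((1 / real CARD('n)) *\<^sub>R (mat 1 :: complex^'n::finite^'n))"
proof -
  have "pos ((1 / real CARD('n)) *\<^sub>R (mat 1 :: complex^'n::finite^'n))"
    by (simp add: pos_qf herm_def cadj_scaleR scaleR_mat_vec)
  moreover have "ctrace ((1 / real CARD('n)) *\<^sub>R (mat 1 :: complex^'n::finite^'n)) = 1"
    by (simp add: ctrace_scaleR ctrace_mat1)
  ultimately show ?thesis by (simp add: dens_def)
qed

lemma hs_mixed: "herm X \<Longrightarrow> hs_inner X ((1 / real CARD('n)) *\<^sub>R (mat 1 :: complex^'n::finite^'n)) =
   of_real (1 / real CARD('n)) * ctrace X"
  by (simp only: hs_herm matrix_scaleR_right matrix_mul_rid ctrace_scaleR)

lemma ereal_sum_Minfty: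
  fixes f :: "'a \<Rightarrow> ereal"
  assumes "finite Y" "y0 \<in> Y" "f y0 = -\<infinity>" "\<forall>y\<in>Y. f y \<noteq> \<infinity>"
  shows "sum f Y = -\<infinity>"
  using assms
proof (induction Y rule: finite_induct)
  case empty thus ?case by simp
next
  case (insert x F)
  have nP: "sum f F \<noteq> \<infinity>" using insert by (simp add: sum_Pinfty)
  show ?case
  proof (cases "x = y0")
    case True thus ?thesis using insert nP by simp
  next
    case False
    hence "sum f F = -\<infinity>" using insert by auto
    thus ?thesis using insert by simp
  qed
qed

lemma local_construct:
  fixes Y :: "nat set" and mu :: "nat \<Rightarrow> complex^'n::finite^'n" and s :: "nat \<Rightarrow> ereal"
  assumes meas: "is_measurement Y mu"
    and wd: "\<forall>\<rho>. dens \<rho> \<longrightarrow> \<not> ((\<exists>y\<in>Y. ereal (Re (hs_inner (mu y) \<rho>)) * s y = \<infinity>) \<and>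
                               (\<exists>y\<in>Y. ereal (Re (hs_inner (mu y) \<rho>)) * s y = -\<infinity>))"
  shows "\<exists>Y' m s'. is_pvm Y' m \<and>
     (\<forall>\<rho>. dens \<rho> \<longrightarrow> \<not> ((\<exists>y\<in>Y'. ereal (Re (hs_inner (m y) \<rho>)) * s' y = \<infinity>) \<and>
                               (\<exists>y\<in>Y'. ereal (Re (hs_inner (m y) \<rho>)) * s' y = -\<infinity>))) \<and>
     (\<forall>\<rho>. dens \<rho> \<longrightarrow> (\<Sum>y\<in>Y'. ereal (Re (hs_inner (m y) \<rho>)) * s' y) =
                      (\<Sum>y\<in>Y. ereal (Re (hs_inner (mu y) \<rho>)) * s y))"
proof -
  have finY: "finite Y" and posmu: "\<forall>y\<in>Y. pos (mu y)" and sumI: "sum mu Y = mat 1"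
    using meas by (auto simp: is_measurement_def)
  define a where "a = (\<lambda>\<rho> y. Re (hs_inner (mu y) \<rho>))"
  have a_ctr: "a \<rho> y = Re (ctrace (mu y ** \<rho>))" if "y \<in> Y" for \<rho> y
    using posmu that by (simp add: a_def hs_herm pos_herm)
  have a_nn: "0 \<le> a \<rho> y" if "dens \<rho>" "y \<in> Y" for \<rho> y
    using posmu that by (simp add: a_ctr dens_def pos_trace_nonneg)
  define \<rho>0 :: "complex^'n^'n" where "\<rho>0 = (1 / real CARD('n)) *\<^sub>R mat 1"
  have d0: "dens \<rho>0" unfolding \<rho>0_def by (rule dens_mixed)
  have a0: "0 < a \<rho>0 y" if y: "y \<in> Y" "mu y \<noteq> 0" for y
  proof -
    have "a \<rho>0 y = Re (of_real (1 / real CARD('n)) * ctrace (mu y))"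
      unfolding a_def \<rho>0_def using y posmu by (subst hs_mixed) (auto simp: pos_herm)
    also have "\<dots> = (1 / real CARD('n)) * Re (ctrace (mu y))" by simp
    finally show ?thesis using pos_trace_pos[of "mu y"] y posmu by simp
  qed
  have excl: "\<not> ((\<exists>y\<in>Y. mu y \<noteq> 0 \<and> s y = \<infinity>) \<and> (\<exists>y\<in>Y. mu y \<noteq> 0 \<and> s y = -\<infinity>))"
  proof
    assume "(\<exists>y\<in>Y. mu y \<noteq> 0 \<and> s y = \<infinity>) \<and> (\<exists>y\<in>Y. mu y \<noteq> 0 \<and> s y = -\<infinity>)"
    then obtain y1 y2 where y1: "y1 \<in> Y" "mu y1 \<noteq> 0" "s y1 = \<infinity>"
      and y2: "y2 \<in> Y" "mu y2 \<noteq> 0" "s y2 = -\<infinity>" by blast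
    have "ereal (a \<rho>0 y1) * s y1 = \<infinity>" using a0[OF y1(1,2)] y1(3) by simp
    moreover have "ereal (a \<rho>0 y2) * s y2 = -\<infinity>" using a0[OF y2(1,2)] y2(3) by simp
    ultimately show False using wd d0 y1(1) y2(1) unfolding a_def by blast
  qed
  define Yi where "Yi = {y\<in>Y. s y = \<infinity> \<or> s y = -\<infinity>}"
  define Yf where "Yf = Y - Yi"
  have Yi_sub: "Yi \<subseteq> Y" by (auto simp: Yi_def)
  have finYi: "finite Yi" using finY Yi_sub finite_subset by blast
  define B where "B = sum mu Yi"
  have posB: "pos B" unfolding B_def using posmu Yi_sub by (intro pos_sum) auto
  obtain K1 P1 b where K1: "finite (K1::nat set)" and P1p: "\<forall>k\<in>K1. proj (P1 k)"
    and P1o: "\<forall>k\<in>K1. \<forall>l\<in>K1. k \<noteq> l \<longrightarrow> P1 k ** P1 l = 0"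
    and bS: "(\<Sum>k\<in>K1. b k *\<^sub>R P1 k) = B" and bnn: "\<forall>k\<in>K1. P1 k \<noteq> 0 \<longrightarrow> 0 \<le> b k"
    using pos_spectral[OF posB] by (elim exE conjE)
  define Kp where "Kp = {k\<in>K1. b k \<noteq> 0}"
  have Kp_sub: "Kp \<subseteq> K1" by (auto simp: Kp_def)
  have finKp: "finite Kp" using K1 Kp_sub finite_subset by blast
  define P where "P = sum P1 Kp"
  have projP: "proj P" unfolding P_def using P1p P1o Kp_sub finKp by (intro proj_sum) auto
  have P1P: "P1 k ** P = P1 k" if "k \<in> Kp" for k
    unfolding P_def using P1p P1o Kp_sub finKp that by (intro proj_sum_mult) auto
  define Z where "Z = mat 1 - P"
  have hP: "cadj P = P" "P ** P = P" using projP by (auto simp: proj_def)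
  have projZ: "proj Z" by (simp add: proj_def Z_def cadj_diff hP matrix_diff_left matrix_diff_right)
  have ZP: "Z ** P = 0" by (simp add: Z_def matrix_diff_left hP)
  have hZ: "cadj Z = Z" "Z ** Z = Z" using projZ by (auto simp: proj_def)
  have hZ': "Z ** (Z ** W) = Z ** W" for W by (simp add: matrix_mul_assoc hZ)
  define r where "r = (\<lambda>y. real_of_ereal (s y))"
  define C where "C = (\<Sum>y\<in>Yf. r y *\<^sub>R mu y)"
  have hC: "herm C" unfolding herm_def C_def cadj_sum cadj_scaleR
    by (intro sum.cong refl) (use posmu in \<open>auto simp: Yf_def pos_def herm_def\<close>)
  define C' where "C' = Z ** C ** Z"
  have hC': "herm C'" using hC hZ by (simp add: herm_def C'_def cadj_mult matrix_mul_assoc)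
  have C'Z: "C' ** Z = C'" by (simp add: C'_def matrix_mul_assoc[symmetric] hZ)
  have ZC': "Z ** C' = C'" by (simp add: C'_def matrix_mul_assoc[symmetric] hZ')
  have C'com: "C' ** Z = Z ** C'" by (simp add: C'Z ZC')
  obtain K2 P2 c where K2: "finite (K2::nat set)" and P2p: "\<forall>k\<in>K2. proj (P2 k)"
    and P2o: "\<forall>k\<in>K2. \<forall>l\<in>K2. k \<noteq> l \<longrightarrow> P2 k ** P2 l = 0" and P2S: "sum P2 K2 = Z"
    and cS: "(\<Sum>k\<in>K2. c k *\<^sub>R P2 k) = C' ** Z"
    using spectral_gen[OF hC' projZ C'com] by (elim exE conjE)
  obtain k0 where k0: "k0 \<notin> K2" using K2 ex_new_if_finite infinite_UNIV_nat by blast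
  define \<sigma> where "\<sigma> = (if \<exists>y\<in>Y. mu y \<noteq> 0 \<and> s y = \<infinity> then \<infinity> else -\<infinity> :: ereal)"
  define m where "m = P2(k0 := P)"
  define s' where "s' = (\<lambda>k. if k = k0 then \<sigma> else ereal (c k))"
  have P2P: "P2 k ** P = 0" if "k \<in> K2" for k
  proof -
    have "P2 k ** P = (P2 k ** sum P2 K2) ** P" using proj_sum_mult[OF K2 P2p P2o that] by simp
    also have "\<dots> = 0" by (simp add: P2S matrix_mul_assoc[symmetric] ZP)
    finally show ?thesis .
  qed
  have PP2: "P ** P2 k = 0" if "k \<in> K2" for k
    using adj_flip[OF _ hP(1) P2P[OF that]] P2p that by (simp add: proj_def)
  have mK2: "sum m K2 = sum P2 K2" using k0 by (intro sum.cong) (auto simp: m_def)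
  have pvm: "is_pvm (insert k0 K2) m"
  proof -
    have mp: "\<forall>k\<in>insert k0 K2. proj (m k)" using P2p projP k0 by (auto simp: m_def)
    have sum1: "sum m (insert k0 K2) = mat 1"
      using K2 k0 mK2 by (simp add: P2S Z_def m_def)
    have orth: "\<forall>k\<in>insert k0 K2. \<forall>l\<in>insert k0 K2. k \<noteq> l \<longrightarrow> m k ** m l = 0"
      using P2o P2P PP2 k0 by (auto simp: m_def)
    show ?thesis unfolding is_pvm_def is_measurement_def
      using mp sum1 orth K2 by (auto simp: proj_pos proj_def)
  qed
  have fin_term: "ereal (Re (hs_inner (m k) \<rho>)) * s' k \<noteq> \<infinity> \<and> ereal (Re (hs_inner (m k) \<rho>)) * s' k \<noteq> -\<infinity>"
    if "k \<in> K2" for k \<rho>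
    using that k0 by (auto simp: s'_def)
  have wd': "\<forall>\<rho>. dens \<rho> \<longrightarrow> \<not> ((\<exists>y\<in>insert k0 K2. ereal (Re (hs_inner (m y) \<rho>)) * s' y = \<infinity>) \<and>
                               (\<exists>y\<in>insert k0 K2. ereal (Re (hs_inner (m y) \<rho>)) * s' y = -\<infinity>))"
  proof (intro allI impI notI)
    fix \<rho> assume "(\<exists>y\<in>insert k0 K2. ereal (Re (hs_inner (m y) \<rho>)) * s' y = \<infinity>) \<and>
                               (\<exists>y\<in>insert k0 K2. ereal (Re (hs_inner (m y) \<rho>)) * s' y = -\<infinity>)"
    then obtain y1 y2 where y1: "y1 \<in> insert k0 K2" "ereal (Re (hs_inner (m y1) \<rho>)) * s' y1 = \<infinity>"
      and y2: "y2 \<in> insert k0 K2" "ereal (Re (hs_inner (m y2) \<rho>)) * s' y2 = -\<infinity>" by blast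
    have "y1 = k0" using y1 fin_term by blast
    moreover have "y2 = k0" using y2 fin_term by blast
    ultimately have "(\<infinity>::ereal) = -\<infinity>" using y1(2) y2(2) by metis
    thus False by simp
  qed
  have eq: "(\<Sum>y\<in>insert k0 K2. ereal (Re (hs_inner (m y) \<rho>)) * s' y) =
            (\<Sum>y\<in>Y. ereal (Re (hs_inner (mu y) \<rho>)) * s y)" if d: "dens \<rho>" for \<rho>
  proof -
    have posr: "pos \<rho>" using d by (simp add: dens_def)
    have hr: "cadj \<rho> = \<rho>" using posr by (simp add: pos_def herm_def)
    define t where "t = Re (ctrace (P ** \<rho>))"
    have tP: "Re (hs_inner P \<rho>) = t" using projP by (simp add: t_def hs_herm proj_herm)
    have rP: "Re (ctrace (\<rho> ** P)) = t" unfolding t_def by (subst ctrace_comm) (rule refl)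
    have t0: "0 \<le> t" using trace_proj_nonneg(1)[OF posr projP] rP by simp
    define tk where "tk = (\<lambda>k. Re (ctrace (P1 k ** \<rho>)))"
    have tk0: "0 \<le> tk k" if "k \<in> K1" for k
      using trace_proj_nonneg(1)[OF posr, of "P1 k"] P1p that ctrace_comm[of "P1 k" \<rho>]
      by (simp add: tk_def)
    have tsum: "t = (\<Sum>k\<in>Kp. tk k)"
      by (simp add: t_def tk_def P_def matrix_sum_left ctrace_sum Re_sum)
    have Btr: "Re (hs_inner B \<rho>) = (\<Sum>k\<in>Kp. b k * tk k)"
    proof -
      have "Re (hs_inner B \<rho>) = Re (ctrace (B ** \<rho>))" using posB by (simp add: hs_herm pos_herm)
      also have "\<dots> = (\<Sum>k\<in>K1. b k * tk k)"
        by (simp add: bS[symmetric] tk_def matrix_sum_left matrix_scaleR_left ctrace_sum ctrace_scaleR Re_sum)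
      also have "\<dots> = (\<Sum>k\<in>Kp. b k * tk k)"
        by (rule sum.mono_neutral_right[OF K1 Kp_sub]) (auto simp: Kp_def)
      finally show ?thesis .
    qed
    have Bsum: "Re (hs_inner B \<rho>) = (\<Sum>y\<in>Yi. a \<rho> y)"
      by (simp add: B_def hs_sum Re_sum a_def)
    have bt_nn: "0 \<le> b k * tk k" if "k \<in> K1" for k
    proof (cases "P1 k = 0")
      case True thus ?thesis by (simp add: tk_def)
    next
      case False thus ?thesis using bnn that tk0[OF that] by simp
    qed
    have aYi: "0 \<le> a \<rho> y" if "y \<in> Yi" for y using a_nn[OF d] Yi_sub that by blast
    have goal: "(\<Sum>y\<in>insert k0 K2. ereal (Re (hs_inner (m y) \<rho>)) * s' y) =
            (\<Sum>y\<in>Y. ereal (a \<rho> y) * s y)"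
    proof (cases "t = 0")
      case False
      hence tpos: "0 < t" using t0 by simp
      have "\<exists>k\<in>Kp. 0 < tk k"
      proof (rule ccontr)
        assume "\<not> (\<exists>k\<in>Kp. 0 < tk k)"
        hence "\<forall>k\<in>Kp. tk k \<le> 0" by auto
        hence "sum tk Kp \<le> 0" by (intro sum_nonpos) auto
        thus False using tsum tpos by simp
      qed
      then obtain k where k: "k \<in> Kp" "0 < tk k" by blast
      have kK1: "k \<in> K1" and bk: "b k \<noteq> 0" using k Kp_sub by (auto simp: Kp_def)
      have "P1 k \<noteq> 0" using k by (auto simp: tk_def)
      hence "0 < b k" using bnn kK1 bk by force
      hence "0 < b k * tk k" using k by simp
      also have "\<dots> \<le> (\<Sum>k\<in>Kp. b k * tk k)"
        by (rule member_le_sum[OF k(1)]) (use bt_nn Kp_sub finKp in auto)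
      finally have "0 < (\<Sum>y\<in>Yi. a \<rho> y)" using Btr Bsum by simp
      have "\<exists>y\<in>Yi. 0 < a \<rho> y"
      proof (rule ccontr)
        assume "\<not> (\<exists>y\<in>Yi. 0 < a \<rho> y)"
        hence "\<forall>y\<in>Yi. a \<rho> y \<le> 0" by auto
        hence "sum (a \<rho>) Yi \<le> 0" by (intro sum_nonpos) auto
        thus False using \<open>0 < (\<Sum>y\<in>Yi. a \<rho> y)\<close> by simp
      qed
      then obtain y where y: "y \<in> Yi" "0 < a \<rho> y" by blast
      have yY: "y \<in> Y" using y Yi_sub by blast
      have mu0: "mu y \<noteq> 0" using y by (auto simp: a_def hs_inner_def)
      have tk0': "ereal t * \<sigma> = \<sigma>" using tpos by (simp add: \<sigma>_def)
      show ?thesis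
      proof (cases "s y = \<infinity>")
        case True
        have sig: "\<sigma> = \<infinity>" using True yY mu0 by (auto simp: \<sigma>_def)
        have "(\<Sum>y\<in>Y. ereal (a \<rho> y) * s y) = \<infinity>"
          unfolding sum_Pinfty using finY yY y True by auto
        moreover have "(\<Sum>y\<in>insert k0 K2. ereal (Re (hs_inner (m y) \<rho>)) * s' y) = \<infinity>"
          unfolding sum_Pinfty using K2 tpos tP sig by (auto simp: m_def s'_def)
        ultimately show ?thesis by simp
      next
        case False
        hence sy: "s y = -\<infinity>" using y by (auto simp: Yi_def)
        have sig: "\<sigma> = -\<infinity>" using excl sy yY mu0 by (auto simp: \<sigma>_def)
        have ty: "ereal (a \<rho> y) * s y = -\<infinity>" using y sy by simp
        have noinf: "\<forall>y\<in>Y. ereal (a \<rho> y) * s y \<noteq> \<infinity>"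
          using wd d ty yY unfolding a_def by blast
        have "(\<Sum>y\<in>Y. ereal (a \<rho> y) * s y) = -\<infinity>"
          by (rule ereal_sum_Minfty[OF finY yY ty noinf])
        moreover have "(\<Sum>y\<in>insert k0 K2. ereal (Re (hs_inner (m y) \<rho>)) * s' y) = -\<infinity>"
        proof (rule ereal_sum_Minfty)
          show "finite (insert k0 K2)" using K2 by simp
          show "k0 \<in> insert k0 K2" by simp
          show "ereal (Re (hs_inner (m k0) \<rho>)) * s' k0 = -\<infinity>"
            using tpos tP sig by (simp add: m_def s'_def)
          show "\<forall>y\<in>insert k0 K2. ereal (Re (hs_inner (m y) \<rho>)) * s' y \<noteq> \<infinity>"
            using fin_term tpos tP sig by (auto simp: m_def s'_def)
        qed
        ultimately show ?thesis by simp
      qed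
    next
      case True
      have rhoP: "\<rho> ** P = 0" using trace_proj_nonneg(2)[OF posr projP] rP True by simp
      have Prho: "P ** \<rho> = 0" using adj_flip[OF hr hP(1) rhoP] by simp
      have "tk k = 0" if "k \<in> Kp" for k
      proof -
        have "P1 k ** \<rho> = P1 k ** (P ** \<rho>)" by (simp add: matrix_mul_assoc P1P[OF that])
        thus ?thesis by (simp add: tk_def Prho)
      qed
      hence "Re (hs_inner B \<rho>) = 0" using Btr by simp
      hence "(\<Sum>y\<in>Yi. a \<rho> y) = 0" using Bsum by simp
      hence aZ: "\<forall>y\<in>Yi. a \<rho> y = 0" using sum_nonneg_eq_0_iff[OF finYi] aYi by blast
      have sYi: "(\<Sum>y\<in>Yi. ereal (a \<rho> y) * s y) = 0" using aZ
        by (intro sum.neutral) (simp add: zero_ereal_def[symmetric])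
      have sfin: "s y = ereal (r y)" if "y \<in> Yf" for y
        using that by (cases "s y") (auto simp: r_def Yf_def Yi_def)
      have "(\<Sum>y\<in>Yf. ereal (a \<rho> y) * s y) = (\<Sum>y\<in>Yf. ereal (a \<rho> y * r y))"
        by (intro sum.cong refl) (simp add: sfin)
      also have "\<dots> = ereal (\<Sum>y\<in>Yf. a \<rho> y * r y)" by simp
      also have "(\<Sum>y\<in>Yf. a \<rho> y * r y) = Re (hs_inner C \<rho>)"
        by (simp add: C_def hs_sum hs_scaleR Re_sum a_def mult.commute)
      finally have sYf: "(\<Sum>y\<in>Yf. ereal (a \<rho> y) * s y) = ereal (Re (hs_inner C \<rho>))" .
      have splitY: "(\<Sum>y\<in>Y. ereal (a \<rho> y) * s y) = (\<Sum>y\<in>Yf. ereal (a \<rho> y) * s y) + (\<Sum>y\<in>Yi. ereal (a \<rho> y) * s y)"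
        unfolding Yf_def using sum.subset_diff[OF Yi_sub finY] by simp
      have ZR: "Z ** \<rho> = \<rho>" by (simp add: Z_def matrix_diff_left Prho)
      have RZ: "\<rho> ** Z = \<rho>" by (simp add: Z_def matrix_diff_right rhoP)
      have "ctrace (C' ** \<rho>) = ctrace (Z ** (C ** \<rho>))"
        by (simp add: C'_def matrix_mul_assoc[symmetric] ZR)
      also have "\<dots> = ctrace ((C ** \<rho>) ** Z)" by (rule ctrace_comm)
      also have "\<dots> = ctrace (C ** \<rho>)" by (simp add: matrix_mul_assoc[symmetric] RZ)
      finally have trC: "ctrace (C' ** \<rho>) = ctrace (C ** \<rho>)" .
      have "(\<Sum>k\<in>K2. ereal (Re (hs_inner (m k) \<rho>)) * s' k) = (\<Sum>k\<in>K2. ereal (Re (hs_inner (P2 k) \<rho>) * c k))"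
        using k0 by (intro sum.cong refl) (auto simp: m_def s'_def)
      also have "\<dots> = ereal (\<Sum>k\<in>K2. Re (hs_inner (P2 k) \<rho>) * c k)" by simp
      also have "(\<Sum>k\<in>K2. Re (hs_inner (P2 k) \<rho>) * c k) = Re (hs_inner (\<Sum>k\<in>K2. c k *\<^sub>R P2 k) \<rho>)"
        by (simp add: hs_sum hs_scaleR Re_sum mult.commute)
      also have "\<dots> = Re (hs_inner C \<rho>)"
        using hC hC' trC by (simp add: cS C'Z hs_herm)
      finally have sK2: "(\<Sum>k\<in>K2. ereal (Re (hs_inner (m k) \<rho>)) * s' k) = ereal (Re (hs_inner C \<rho>))" .
      have "(\<Sum>y\<in>insert k0 K2. ereal (Re (hs_inner (m y) \<rho>)) * s' y)
          = ereal (Re (hs_inner (m k0) \<rho>)) * s' k0 + (\<Sum>k\<in>K2. ereal (Re (hs_inner (m k) \<rho>)) * s' k)"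
        using K2 k0 by simp
      also have "ereal (Re (hs_inner (m k0) \<rho>)) * s' k0 = 0" using tP True by (simp add: m_def s'_def zero_ereal_def[symmetric])
      finally show ?thesis using sK2 sYf sYi splitY by simp
    qed
    thus ?thesis by (simp add: a_def)
  qed

  show ?thesis using pvm wd' eq by blast
qed




theorem proposition3p5:
  fixes S :: "'n::finite qscore"
  assumes "quantum_score S"
  shows "\<exists>S' :: 'n qscore. quantum_score S' \<and> projective S' \<and>
           (\<forall>\<rho>' \<rho>. dens \<rho>' \<longrightarrow> dens \<rho> \<longrightarrow> expected_score S' \<rho>' \<rho> = expected_score S \<rho>' \<rho>)"
proof -
  let ?P = "\<lambda>\<rho>' (x :: nat set \<times> (nat \<Rightarrow> complex^'n^'n) \<times> (nat \<Rightarrow> ereal)).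
     is_pvm (fst x) (fst (snd x)) \<and>
     (\<forall>\<rho>. dens \<rho> \<longrightarrow> \<not> ((\<exists>y\<in>fst x. ereal (Re (hs_inner (fst (snd x) y) \<rho>)) * snd (snd x) y = \<infinity>) \<and>
                               (\<exists>y\<in>fst x. ereal (Re (hs_inner (fst (snd x) y) \<rho>)) * snd (snd x) y = -\<infinity>))) \<and>
     (\<forall>\<rho>. dens \<rho> \<longrightarrow> (\<Sum>y\<in>fst x. ereal (Re (hs_inner (fst (snd x) y) \<rho>)) * snd (snd x) y) =
                      expected_score S \<rho>' \<rho>)"
  have ex: "\<forall>\<rho>'. \<exists>x. dens \<rho>' \<longrightarrow> ?P \<rho>' x"
  proof
    fix \<rho>'
    show "\<exists>x. dens \<rho>' \<longrightarrow> ?P \<rho>' x"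
    proof (cases "dens \<rho>'")
      case True
      have meas: "is_measurement (fst (snd S \<rho>')) (snd (snd S \<rho>'))"
        using assms True by (simp add: quantum_score_def)
      have wd: "\<forall>\<rho>. dens \<rho> \<longrightarrow> \<not> ((\<exists>y\<in>fst (snd S \<rho>'). ereal (Re (hs_inner (snd (snd S \<rho>') y) \<rho>)) * fst S \<rho>' y = \<infinity>) \<and>
                               (\<exists>y\<in>fst (snd S \<rho>'). ereal (Re (hs_inner (snd (snd S \<rho>') y) \<rho>)) * fst S \<rho>' y = -\<infinity>))"
        using assms True by (simp add: quantum_score_def score_well_defined_def score_term_def)
      obtain Y' m s' where "is_pvm Y' m \<and>
     (\<forall>\<rho>. dens \<rho> \<longrightarrow> \<not> ((\<exists>y\<in>Y'. ereal (Re (hs_inner (m y) \<rho>)) * s' y = \<infinity>) \<and>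
                               (\<exists>y\<in>Y'. ereal (Re (hs_inner (m y) \<rho>)) * s' y = -\<infinity>))) \<and>
     (\<forall>\<rho>. dens \<rho> \<longrightarrow> (\<Sum>y\<in>Y'. ereal (Re (hs_inner (m y) \<rho>)) * s' y) =
                      (\<Sum>y\<in>fst (snd S \<rho>'). ereal (Re (hs_inner (snd (snd S \<rho>') y) \<rho>)) * fst S \<rho>' y))"
        using local_construct[OF meas wd] by blast
      hence "?P \<rho>' (Y', m, s')" unfolding expected_score_def score_term_def fst_conv snd_conv by (elim conjE) (intro conjI)
      thus ?thesis by blast
    qed simp
  qed
  from choice[OF ex] obtain f where f0: "\<forall>\<rho>'. dens \<rho>' \<longrightarrow> ?P \<rho>' (f \<rho>')" by (elim exE)
  have f: "\<And>\<rho>'. dens \<rho>' \<Longrightarrow> ?P \<rho>' (f \<rho>')" using f0 by blast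
  define S' :: "'n qscore" where "S' = (\<lambda>\<rho>' y. snd (snd (f \<rho>')) y, \<lambda>\<rho>'. (fst (f \<rho>'), fst (snd (f \<rho>'))))"
  show ?thesis
  proof (intro exI conjI allI impI)
    show "quantum_score S'"
      using f unfolding quantum_score_def score_well_defined_def score_term_def S'_def is_pvm_def
      by simp
    show "projective S'" using f unfolding projective_def S'_def by simp
    fix \<rho>' \<rho> :: "complex^'n^'n" assume "dens \<rho>'" "dens \<rho>"
    thus "expected_score S' \<rho>' \<rho> = expected_score S \<rho>' \<rho>"
      using f[OF \<open>dens \<rho>'\<close>] \<open>dens \<rho>\<close> unfolding S'_def expected_score_def score_term_def
      by (simp only: fst_conv snd_conv)
  qed
qed

end
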